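(* Let $F=\frac19\begin{pmatrix}1&1&1\\1&1&1\\1&1&1\end{pmatrix}$ (box blur filter). Then the equation $F*X=B$ with the zero boundary condition, for unknown $X\in\mathbb{R}^{m\times n}$, has a unique solution for every $B\in\mathbb{R}^{m\times n}$ if and only if $m,n\notin\{3l-1: l\in\mathbb{N}\}$.
   Context: $\mathbb{N}=\{1,2,3,\dots\}$. For $F=[f_{ij}]\in\mathbb{R}^{3\times3}$ and $X=[x_{ij}]\in\mathbb{R}^{m\times n}$, the convolution $F*X\in\mathbb{R}^{m\times n}$ is defined by $[F*X]_{ij}=\sum_{l_1=1}^3\sum_{l_2=1}^3 f_{l_1l_2}\,x_{i-l_1+2,\,j-l_2+2}$ for $1\le i\le m$, $1\le j\le n$, where under the zero boundary condition all values $x_{ij}$ with $i\in\{0,m+1\}$ or $j\in\{0,n+1\}$ are $0$. *)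

theory Defs
  imports "HOL-Analysis.Analysis"
begin

text \<open>An m x n real matrix is represented as a function nat => nat => real whose
  entries are indexed by 1..m and 1..n; entries outside this range are 0
  (this encodes both the matrix carrier and the zero boundary condition).\<close>

definition mats :: "nat \<Rightarrow> nat \<Rightarrow> (nat \<Rightarrow> nat \<Rightarrow> real) set" where
  "mats m n = {X. \<forall>i j. \<not> (1 \<le> i \<and> i \<le> m \<and> 1 \<le> j \<and> j \<le> n) \<longrightarrow> X i j = 0}"

definition zb :: "nat \<Rightarrow> nat \<Rightarrow> (nat \<Rightarrow> nat \<Rightarrow> real) \<Rightarrow> int \<Rightarrow> int \<Rightarrow> real" where
  "zb m n X i j = (if 1 \<le> i \<and> i \<le> int m \<and> 1 \<le> j \<and> j \<le> int n then X (nat i) (nat j) else 0)"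

definition conv :: "nat \<Rightarrow> nat \<Rightarrow> (nat \<Rightarrow> nat \<Rightarrow> real) \<Rightarrow> (nat \<Rightarrow> nat \<Rightarrow> real) \<Rightarrow> (nat \<Rightarrow> nat \<Rightarrow> real)" where
  "conv m n F X = (\<lambda>i j. if 1 \<le> i \<and> i \<le> m \<and> 1 \<le> j \<and> j \<le> n then
      (\<Sum>l1\<in>{1..3::nat}. \<Sum>l2\<in>{1..3::nat}.
          F l1 l2 * zb m n X (int i - int l1 + 2) (int j - int l2 + 2))
    else 0)"

definition box_blur :: "nat \<Rightarrow> nat \<Rightarrow> real" where
  "box_blur i j = 1/9"

end

theory Submission
  imports Defs
begin

definition supp1 :: "nat \<Rightarrow> (nat \<Rightarrow> real) \<Rightarrow> bool" where
  "supp1 k x = (\<forall>i. \<not> (1 \<le> i \<and> i \<le> k) \<longrightarrow> x i = 0)"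

definition T1 :: "nat \<Rightarrow> (nat \<Rightarrow> real) \<Rightarrow> nat \<Rightarrow> real" where
  "T1 k x i = (if 1 \<le> i \<and> i \<le> k then x (i - 1) + x i + x (i + 1) else 0)"

fun yy :: "nat \<Rightarrow> real" where
  "yy 0 = 0" | "yy (Suc 0) = 1" | "yy (Suc (Suc i)) = - yy (Suc i) - yy i"

lemma yy_val: "yy i = (if i mod 3 = 0 then 0 else if i mod 3 = 1 then 1 else -1)"
  by (induction i rule: yy.induct) (auto simp: mod_Suc)

fun ss :: "(nat \<Rightarrow> real) \<Rightarrow> real \<Rightarrow> nat \<Rightarrow> real" where
  "ss b t 0 = 0" | "ss b t (Suc 0) = t"
| "ss b t (Suc (Suc i)) = b (Suc i) - ss b t (Suc i) - ss b t i"

lemma ss_lin: "ss b t i = ss b 0 i + t * yy i"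
  by (induction b t i rule: ss.induct) (auto simp: algebra_simps)

lemma T1_supp: "supp1 k (T1 k x)"
  by (simp add: supp1_def T1_def)

lemma exist1:
  assumes "supp1 k b" "k mod 3 \<noteq> 2"
  shows "\<exists>x. supp1 k x \<and> T1 k x = b"
proof -
  have ny: "yy (k+1) \<noteq> 0" using assms(2) by (simp add: yy_val) presburger
  define t where "t = - ss b 0 (k+1) / yy (k+1)"
  have "ss b t (k+1) = ss b 0 (k+1) + t * yy (k+1)" by (rule ss_lin)
  then have end0: "ss b t (k+1) = 0" using ny by (simp add: t_def)
  define x where "x = (\<lambda>i. if 1 \<le> i \<and> i \<le> k then ss b t i else 0)"
  have xs: "x i = ss b t i" if hi: "i \<le> k + 1" for i
  proof -
    consider "i = 0" | "1 \<le> i \<and> i \<le> k" | "i = k + 1" using hi by (cases "i = 0"; cases "i = k+1") auto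
    then show ?thesis
    proof cases
      case 3 then show ?thesis using end0 by (simp add: x_def)
    qed (auto simp: x_def)
  qed
  have "T1 k x = b"
  proof
    fix i show "T1 k x i = b i"
    proof (cases "1 \<le> i \<and> i \<le> k")
      case True
      then obtain j where j: "i = Suc j" by (cases i) auto
      have "ss b t (Suc (Suc j)) = b (Suc j) - ss b t (Suc j) - ss b t j" by simp
      then show ?thesis using True j xs[of j] xs[of "Suc j"] xs[of "Suc (Suc j)"]
        by (simp add: T1_def)
    next
      case False then show ?thesis using assms(1) by (auto simp: T1_def supp1_def)
    qed
  qed
  moreover have "supp1 k x" by (simp add: supp1_def x_def)
  ultimately show ?thesis by blast
qed

lemma kernel1:
  assumes "supp1 k d" "T1 k d = (\<lambda>_. 0)" "k mod 3 \<noteq> 2"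
  shows "d = (\<lambda>_. 0)"
proof -
  have d0: "d 0 = 0" using assms(1) by (simp add: supp1_def)
  have rec: "d (Suc (Suc j)) = - d (Suc j) - d j" if "Suc j \<le> k" for j
    using fun_cong[OF assms(2), of "Suc j"] that by (simp add: T1_def)
  have key: "i \<le> k + 1 \<longrightarrow> d i = d 1 * yy i" for i
  proof (induction i rule: yy.induct)
    case 1 then show ?case using d0 by simp
  next
    case 2 then show ?case by simp
  next
    case (3 i) then show ?case using rec[of i] by (auto simp: algebra_simps)
  qed
  have ny: "yy (k+1) \<noteq> 0" using assms(3) by (simp add: yy_val) presburger
  have "d (k+1) = 0" using assms(1) by (simp add: supp1_def)
  then have "d 1 = 0" using key[of "k+1"] ny by simp
  then have "d i = 0" for i using key[of i] assms(1) by (cases "i \<le> k + 1") (auto simp: supp1_def)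
  then show ?thesis by auto
qed

lemma uniq1:
  assumes "supp1 k x" "supp1 k x'" "T1 k x = T1 k x'" "k mod 3 \<noteq> 2"
  shows "x = x'"
proof -
  have s1: "supp1 k (\<lambda>i. x i - x' i)" using assms(1,2) by (simp add: supp1_def)
  have t1: "T1 k (\<lambda>i. x i - x' i) = (\<lambda>_. 0)"
  proof
    fix i show "T1 k (\<lambda>i. x i - x' i) i = 0"
    proof (cases "1 \<le> i \<and> i \<le> k")
      case True then show ?thesis using fun_cong[OF assms(3), of i] by (simp add: T1_def)
    next
      case False then show ?thesis by (auto simp: T1_def)
    qed
  qed
  have "(\<lambda>i. x i - x' i) = (\<lambda>_. 0)" by (rule kernel1[OF s1 t1 assms(4)])
  then have "x i - x' i = 0" for i using fun_cong by metis
  then show ?thesis by auto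
qed

lemma ex1_sol:
  assumes "supp1 k b" "k mod 3 \<noteq> 2"
  shows "\<exists>!x. supp1 k x \<and> T1 k x = b"
proof -
  obtain x where x: "supp1 k x" "T1 k x = b" using exist1[OF assms] by blast
  show ?thesis
  proof (rule ex1I[of _ x])
    show "supp1 k x \<and> T1 k x = b" using x by simp
  next
    fix y assume "supp1 k y \<and> T1 k y = b"
    then show "y = x" using uniq1[of k y x] x assms(2) by simp
  qed
qed

definition vv :: "nat \<Rightarrow> nat \<Rightarrow> real" where
  "vv k i = (if 1 \<le> i \<and> i \<le> k then (if i mod 3 = 1 then 1 else if i mod 3 = 2 then -1 else 0) else 0)"

lemma m0a: "(i::nat) mod 3 = 0 \<Longrightarrow> 1 \<le> i \<Longrightarrow> i \<ge> 3" by (metis One_nat_def Suc_leI le_antisym mod_less nat_less_le not_less_eq_eq numeral_3_eq_3 one_le_numeral zero_neq_numeral)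
lemma m0b: "(i::nat) mod 3 = 0 \<Longrightarrow> i \<le> k \<Longrightarrow> k mod 3 = 2 \<Longrightarrow> i + 1 \<le> k"
  by (cases "i = k") auto
lemma m0c: "(i::nat) mod 3 = 0 \<Longrightarrow> i \<ge> 3 \<Longrightarrow> (i - 1) mod 3 = 2" by (cases i) (auto simp: mod_Suc split: if_splits)
lemma m0d: "(i::nat) mod 3 = 0 \<Longrightarrow> (i + 1) mod 3 = 1" by (auto simp: mod_Suc)
lemma m1b: "(i::nat) mod 3 = 1 \<Longrightarrow> i \<le> k \<Longrightarrow> k mod 3 = 2 \<Longrightarrow> i + 1 \<le> k"
  by (cases "i = k") auto
lemma m1c: "(i::nat) mod 3 = 1 \<Longrightarrow> (i - 1) mod 3 = 0" by (cases i) (auto simp: mod_Suc split: if_splits)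
lemma m1d: "(i::nat) mod 3 = 1 \<Longrightarrow> (i + 1) mod 3 = 2" by (auto simp: mod_Suc)
lemma m2a: "(i::nat) mod 3 = 2 \<Longrightarrow> i \<ge> 2" by (metis le_less_linear less_2_cases mod_less numeral_2_eq_2 not_less_eq zero_neq_numeral One_nat_def Suc_1 mod_Suc n_not_Suc_n)
lemma m2c: "(i::nat) mod 3 = 2 \<Longrightarrow> (i - 1) mod 3 = 1" by (cases i) (auto simp: mod_Suc split: if_splits)
lemma m2d: "(i::nat) mod 3 = 2 \<Longrightarrow> (i + 1) mod 3 = 0" by (auto simp: mod_Suc)

lemma vv_ker:
  assumes "k mod 3 = 2"
  shows "T1 k (vv k) = (\<lambda>_. 0)"
proof
  fix i show "T1 k (vv k) i = 0"
  proof (cases "1 \<le> i \<and> i \<le> k")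
    case False then show ?thesis by (auto simp: T1_def)
  next
    case True
    then have i1: "1 \<le> i" and ik: "i \<le> k" by auto
    consider "i mod 3 = 0" | "i mod 3 = 1" | "i mod 3 = 2" by linarith
    then show ?thesis
    proof cases
      case 1
      have a: "i \<ge> 3" "i + 1 \<le> k" using m0a[OF 1 i1] m0b[OF 1 ik assms] by auto
      have b: "(i - 1) mod 3 = 2" "(i+1) mod 3 = 1" using m0c[OF 1 a(1)] m0d[OF 1] by auto
      have "vv k (i - 1) = -1" "vv k i = 0" "vv k (i+1) = 1" using a b 1 ik by (auto simp: vv_def)
      then show ?thesis using True by (simp add: T1_def)
    next
      case 2
      have a: "i + 1 \<le> k" using m1b[OF 2 ik assms] .
      have b: "(i - 1) mod 3 = 0" "(i+1) mod 3 = 2" using m1c[OF 2] m1d[OF 2] by auto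
      have "vv k (i - 1) = 0" "vv k i = 1" "vv k (i+1) = -1" using a b 2 ik i1 by (auto simp: vv_def)
      then show ?thesis using True by (simp add: T1_def)
    next
      case 3
      have a: "i \<ge> 2" using m2a[OF 3] .
      have b: "(i - 1) mod 3 = 1" "(i+1) mod 3 = 0" using m2c[OF 3] m2d[OF 3] by auto
      have "vv k (i - 1) = 1" "vv k i = -1" "vv k (i+1) = 0" using a b 3 ik by (auto simp: vv_def)
      then show ?thesis using True by (simp add: T1_def)
    qed
  qed
qed

lemma zb_int: "X \<in> mats m n \<Longrightarrow> zb m n X (int a) (int b) = X a b"
  by (auto simp: zb_def mats_def)

lemma zb_nn:
  assumes "X \<in> mats m n" "a \<ge> 0" "b \<ge> 0"
  shows "zb m n X a b = X (nat a) (nat b)"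
proof (cases "1 \<le> a \<and> a \<le> int m \<and> 1 \<le> b \<and> b \<le> int n")
  case True then show ?thesis by (simp add: zb_def)
next
  case False
  then have "\<not> (1 \<le> nat a \<and> nat a \<le> m \<and> 1 \<le> nat b \<and> nat b \<le> n)" using assms(2,3) by auto
  then show ?thesis using False assms(1) by (simp add: zb_def mats_def)
qed

lemma nat_aux: "nat (1 + int i) = Suc i" "nat (int i - 1) = i - 1" by auto

lemma set3: "{1..3::nat} = {1,2,3}" "{Suc 0..3::nat} = {1,2,3}" by auto

lemma conv_eq:
  assumes "X \<in> mats m n"
  shows "conv m n box_blur X = (\<lambda>i j. T1 m (\<lambda>a. T1 n (X a) j) i / 9)"
proof (intro ext)
  fix i j
  show "conv m n box_blur X i j = T1 m (\<lambda>a. T1 n (X a) j) i / 9"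
  proof (cases "1 \<le> i \<and> i \<le> m \<and> 1 \<le> j \<and> j \<le> n")
    case True
    have e1: "int i - int 1 + 2 = int (i+1)" "int i - int 2 + 2 = int i" "int i - int 3 + 2 = int (i-1)"
      "int j - int 1 + 2 = int (j+1)" "int j - int 2 + 2 = int j" "int j - int 3 + 2 = int (j-1)"
      using True by auto
    have "conv m n box_blur X i j = (\<Sum>l1\<in>{1,2,3::nat}. \<Sum>l2\<in>{1,2,3::nat}.
          box_blur l1 l2 * zb m n X (int i - int l1 + 2) (int j - int l2 + 2))"
      using True by (simp add: conv_def set3)
    also have "\<dots> = (X (i+1) (j+1) + X (i+1) j + X (i+1) (j-1) + X i (j+1) + X i j + X i (j-1)
        + X (i-1) (j+1) + X (i-1) j + X (i-1) (j-1)) / 9"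
      using True by (simp add: zb_nn[OF assms] nat_aux box_blur_def field_simps)
    finally show ?thesis using True by (simp add: T1_def field_simps)
  next
    case False then show ?thesis by (auto simp: conv_def T1_def)
  qed
qed

lemma mats_row: "X \<in> mats m n \<Longrightarrow> supp1 n (X a)"
  by (auto simp: mats_def supp1_def)

lemma mats_zero_row: "X \<in> mats m n \<Longrightarrow> \<not> (1 \<le> a \<and> a \<le> m) \<Longrightarrow> X a = (\<lambda>_. 0)"
  by (auto simp: mats_def)

lemma T1_zero: "T1 k (\<lambda>_. 0) = (\<lambda>_. 0)" by (auto simp: T1_def)

lemma T1_scale: "T1 k (\<lambda>j. c * w j) = (\<lambda>j. c * T1 k w j)"
  by (auto simp: T1_def algebra_simps)

lemma T1_scale2: "T1 k (\<lambda>j. w j * c) = (\<lambda>j. T1 k w j * c)"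
  by (auto simp: T1_def algebra_simps)

lemma tensor_conv:
  assumes "supp1 m u" "supp1 n w"
  shows "conv m n box_blur (\<lambda>i j. u i * w j) = (\<lambda>i j. T1 m u i * T1 n w j / 9)"
proof -
  have "(\<lambda>i j. u i * w j) \<in> mats m n" using assms by (auto simp: mats_def supp1_def)
  then show ?thesis by (simp add: conv_eq T1_scale T1_scale2)
qed

lemma mod_set: "(m \<in> {3*l - 1 | l::nat. l \<ge> 1}) = (m mod 3 = 2)"
proof
  assume "m \<in> {3*l - 1 | l::nat. l \<ge> 1}"
  then obtain l where l: "m = 3*l - 1" "l \<ge> 1" by auto
  then obtain l' where "l = Suc l'" by (cases l) auto
  then have "m = 2 + 3*l'" using l by simp
  then show "m mod 3 = 2" by (simp only: mod_mult_self2) simp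
next
  assume a: "m mod 3 = 2"
  define q where "q = m div 3"
  have hm: "m = 3*q + 2" using a div_mult_mod_eq[of m 3] unfolding q_def by linarith
  have "m = 3*(q+1) - 1 \<and> q + 1 \<ge> 1" using hm by simp
  then show "m \<in> {3*l - 1 | l::nat. l \<ge> 1}" by blast
qed

definition ind :: "nat \<Rightarrow> nat \<Rightarrow> real" where
  "ind k i = (if 1 \<le> i \<and> i \<le> k then 1 else 0)"

lemma nonuniq:
  assumes "\<forall>B\<in>mats m n. \<exists>!X. X \<in> mats m n \<and> conv m n box_blur X = B"
    and "X \<in> mats m n" "conv m n box_blur X = (\<lambda>_ _. 0)" "X \<noteq> (\<lambda>_ _. 0)"
  shows False
proof -
  have z: "(\<lambda>_ _. 0) \<in> mats m n" by (simp add: mats_def)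
  have c0: "conv m n box_blur (\<lambda>_ _. 0) = (\<lambda>_ _. 0)" by (simp add: conv_eq[OF z] T1_zero)
  have "\<exists>!X. X \<in> mats m n \<and> conv m n box_blur X = (\<lambda>_ _. 0)" using assms(1) z by blast
  then have "X = (\<lambda>_ _. 0)" using assms(2,3) z c0 by blast
  then show False using assms(4) by blast
qed

theorem corollary1:
  fixes m n :: nat
  assumes "m \<ge> 1" and "n \<ge> 1"
  shows "(\<forall>B\<in>mats m n. \<exists>!X. X \<in> mats m n \<and> conv m n box_blur X = B)
         \<longleftrightarrow> (m \<notin> {3*l - 1 | l::nat. l \<ge> 1} \<and> n \<notin> {3*l - 1 | l::nat. l \<ge> 1})"
  unfolding mod_set
proof
  assume H: "\<forall>B\<in>mats m n. \<exists>!X. X \<in> mats m n \<and> conv m n box_blur X = B"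
  have sv: "supp1 k (vv k)" for k by (simp add: supp1_def vv_def)
  have si: "supp1 k (ind k)" for k by (simp add: supp1_def ind_def)
  have v1: "vv k 1 = 1" "ind k 1 = 1" if "k \<ge> 1" for k using that by (auto simp: vv_def ind_def)
  show "m mod 3 \<noteq> 2 \<and> n mod 3 \<noteq> 2"
  proof (intro conjI notI)
    assume a: "m mod 3 = 2"
    let ?X = "\<lambda>i j. vv m i * ind n j"
    have "?X \<in> mats m n" using sv si by (auto simp: mats_def supp1_def)
    moreover have "conv m n box_blur ?X = (\<lambda>_ _. 0)" by (simp add: tensor_conv[OF sv si] vv_ker[OF a])
    moreover have "?X \<noteq> (\<lambda>_ _. 0)"
    proof
      assume h: "?X = (\<lambda>_ _. 0)"
      have "?X 1 1 = 1" using v1[OF assms(1)] v1[OF assms(2)] by simp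
      then show False using h by (metis zero_neq_one)
    qed
    ultimately show False using nonuniq[OF H] by blast
  next
    assume a: "n mod 3 = 2"
    let ?X = "\<lambda>i j. ind m i * vv n j"
    have "?X \<in> mats m n" using sv si by (auto simp: mats_def supp1_def)
    moreover have "conv m n box_blur ?X = (\<lambda>_ _. 0)" by (simp add: tensor_conv[OF si sv] vv_ker[OF a])
    moreover have "?X \<noteq> (\<lambda>_ _. 0)"
    proof
      assume h: "?X = (\<lambda>_ _. 0)"
      have "?X 1 1 = 1" using v1[OF assms(1)] v1[OF assms(2)] by simp
      then show False using h by (metis zero_neq_one)
    qed
    ultimately show False using nonuniq[OF H] by blast
  qed
next
  assume "m mod 3 \<noteq> 2 \<and> n mod 3 \<noteq> 2"
  then have hm: "m mod 3 \<noteq> 2" and hn: "n mod 3 \<noteq> 2" by auto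
  show "\<forall>B\<in>mats m n. \<exists>!X. X \<in> mats m n \<and> conv m n box_blur X = B"
  proof
    fix B assume B: "B \<in> mats m n"
    define Y where "Y = (\<lambda>i j. if 1 \<le> j \<and> j \<le> n then
        (THE x. supp1 m x \<and> T1 m x = (\<lambda>i. 9 * B i j)) i else 0)"
    have Yj: "supp1 m (\<lambda>i. Y i j) \<and> T1 m (\<lambda>i. Y i j) = (\<lambda>i. 9 * B i j)" if "1 \<le> j \<and> j \<le> n" for j
    proof -
      have sb: "supp1 m (\<lambda>i. 9 * B i j)" using B by (auto simp: mats_def supp1_def)
      have "\<exists>!x. supp1 m x \<and> T1 m x = (\<lambda>i. 9 * B i j)"
        by (rule ex1_sol[OF sb hm])
      from theI'[OF this] show ?thesis using that by (simp add: Y_def)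
    qed
    have Ysupp: "Y a = (\<lambda>_. 0)" if "\<not> (1 \<le> a \<and> a \<le> m)" for a
    proof
      fix j show "Y a j = 0"
        using Yj[of j] that by (cases "1 \<le> j \<and> j \<le> n") (auto simp: supp1_def Y_def)
    qed
    have Yrow: "supp1 n (Y a)" for a by (simp add: supp1_def Y_def)
    define X where "X = (\<lambda>a. if 1 \<le> a \<and> a \<le> m then (THE x. supp1 n x \<and> T1 n x = Y a) else (\<lambda>_. 0))"
    have Xa: "supp1 n (X a) \<and> T1 n (X a) = Y a" for a
    proof (cases "1 \<le> a \<and> a \<le> m")
      case True
      have "\<exists>!x. supp1 n x \<and> T1 n x = Y a"
        by (rule ex1_sol[OF Yrow hn])
      from theI'[OF this] show ?thesis using True by (simp add: X_def)
    next
      case False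
      have "X a = (\<lambda>_. 0)" by (simp only: X_def if_not_P[OF False])
      then show ?thesis using Ysupp[OF False] by (simp add: supp1_def T1_zero)
    qed
    have XM: "X \<in> mats m n" unfolding mats_def
    proof (intro CollectI allI impI)
      fix i j assume h: "\<not> (1 \<le> i \<and> i \<le> m \<and> 1 \<le> j \<and> j \<le> n)"
      show "X i j = 0"
      proof (cases "1 \<le> i \<and> i \<le> m")
        case True then have "\<not> (1 \<le> j \<and> j \<le> n)" using h by auto
        then show ?thesis using Xa[of i] unfolding supp1_def by blast
      next
        case False then show ?thesis by (simp only: X_def if_not_P[OF False] if_False)
      qed
    qed
    have "conv m n box_blur X = B"
    proof (intro ext)
      fix i j
      have "conv m n box_blur X i j = T1 m (\<lambda>a. Y a j) i / 9" using Xa by (simp add: conv_eq[OF XM])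
      also have "\<dots> = B i j"
      proof (cases "1 \<le> j \<and> j \<le> n")
        case True then show ?thesis using Yj[OF True] by simp
      next
        case False
        then have "(\<lambda>a. Y a j) = (\<lambda>_. 0)" by (simp only: Y_def if_not_P[OF False] if_False)
        then show ?thesis using B False by (simp add: T1_zero mats_def)
      qed
      finally show "conv m n box_blur X i j = B i j" .
    qed
    moreover have "X' = X" if X': "X' \<in> mats m n" "conv m n box_blur X' = B" for X'
    proof -
      have eq: "T1 m (\<lambda>a. T1 n (X' a) j) = T1 m (\<lambda>a. T1 n (X a) j)" for j
      proof
        fix i
        have "T1 m (\<lambda>a. T1 n (X' a) j) i / 9 = T1 m (\<lambda>a. T1 n (X a) j) i / 9"
          using fun_cong[OF fun_cong[OF X'(2)[unfolded conv_eq[OF X'(1)]]]]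
                fun_cong[OF fun_cong[OF `conv m n box_blur X = B`[unfolded conv_eq[OF XM]]]]
          by simp
        then show "T1 m (\<lambda>a. T1 n (X' a) j) i = T1 m (\<lambda>a. T1 n (X a) j) i" by simp
      qed
      have sp: "supp1 m (\<lambda>a. T1 n (Z a) j)" if "Z \<in> mats m n" for Z j
        using mats_zero_row[OF that] by (auto simp: supp1_def T1_zero)
      have "(\<lambda>a. T1 n (X' a) j) = (\<lambda>a. T1 n (X a) j)" for j
        using uniq1[OF sp[OF X'(1)] sp[OF XM] eq hm] .
      then have "T1 n (X' a) j = T1 n (X a) j" for a j using fun_cong by metis
      then have "T1 n (X' a) = T1 n (X a)" for a by (rule ext)
      then have "X' a = X a" for a using uniq1[OF mats_row[OF X'(1)] mats_row[OF XM] _ hn] by blast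
      then show ?thesis by auto
    qed
    ultimately show "\<exists>!X. X \<in> mats m n \<and> conv m n box_blur X = B" using XM by blast
  qed
qed

end
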